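(* Let $M$ be the spacetime with metric $ds^2=-b^2(r)dt^2+f_1^2(r)dr^2+f_2^2(r)(d\theta^2+\sin^2\theta\,d\phi^2)$ ($b,f_1,f_2$ smooth and positive), with $u_k$, $\chi_k$ as in the context. Let $\kappa_1,\kappa_2,\kappa_3$ be constants and $$K_{kl}=(\kappa_2f_2^2-2\kappa_3b^2)u_ku_l+(\kappa_1+2\kappa_2f_2^2+\kappa_3b^2)g_{kl}-\kappa_2f_2^2\,\chi_k\chi_l,$$ and let $T_{kl}=(\mu+p_\perp)u_ku_l+p_\perp g_{kl}+(p_r-p_\perp)\chi_k\chi_l$ with functions $\mu(r),p_r(r),p_\perp(r)$, and $P=\tfrac13(p_r+2p_\perp)$. Then the conformal Killing gravity field equations $R_{kl}-\tfrac12Rg_{kl}=T_{kl}+K_{kl}$ are equivalent to the three scalar equations $$\tfrac12R^\star=\mu-3\kappa_3b^2-\kappa_2f_2^2-\kappa_1,\qquad D=\tfrac32P+\tfrac12\mu+2\kappa_2f_2^2+\kappa_1,\qquad \Sigma=(p_r-p_\perp)-\kappa_2f_2^2,$$ where $R^\star$, $D$, $\Sigma$ are the functions of $r$ defined in the context.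
   Context: $u_k$ has components $u_0=-b$, $u_r=u_\theta=u_\phi=0$; $\chi_k$ has components $\chi_r=f_1$ and all others zero. $R_{kl}$ is the Ricci tensor of $g$ and $R$ its trace. Primes denote $d/dr$. Define $D=\dfrac{1}{bf_1^2}\left[b''-b'\left(\dfrac{f_1'}{f_1}-2\dfrac{f_2'}{f_2}\right)\right]$ (this is $\nabla_p\dot u^p$, where $\dot u_k=u^j\nabla_ju_k$), $\Sigma=-\dfrac{1}{bf_1^2}\left[b''-b'\left(\dfrac{f_1'}{f_1}+\dfrac{f_2'}{f_2}\right)\right]-\dfrac{1}{f_1^2}\left[\dfrac{f_1^2}{f_2^2}+\dfrac{f_2''}{f_2}-\left(\dfrac{f_2'}{f_2}\right)^2-\dfrac{f_1'f_2'}{f_1f_2}\right]$, $R^\star=\dfrac{2}{f_2^2}-\dfrac{2}{f_1^2}\left[2\dfrac{f_2''}{f_2}-2\dfrac{f_1'f_2'}{f_1f_2}+\left(\dfrac{f_2'}{f_2}\right)^2\right]$. *)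

theory Defs
  imports "HOL-Analysis.Analysis"
begin

text \<open>Points of the coordinate chart are functions nat \<Rightarrow> real, of which only
  the components 0,1,2,3 = t, r, theta, phi are used. Tensor indices range over 0..3.\<close>

definition smooth_on :: "real set \<Rightarrow> (real \<Rightarrow> real) \<Rightarrow> bool" where
  "smooth_on I f \<longleftrightarrow> (\<forall>n. \<forall>x\<in>I. ((deriv ^^ n) f) differentiable (at x))"

definition pd :: "nat \<Rightarrow> ((nat \<Rightarrow> real) \<Rightarrow> real) \<Rightarrow> (nat \<Rightarrow> real) \<Rightarrow> real" where
  "pd i F x = deriv (\<lambda>s. F (x(i := s))) (x i)"

type_synonym metric = "(nat \<Rightarrow> real) \<Rightarrow> nat \<Rightarrow> nat \<Rightarrow> real"

definition inv_metric :: "metric \<Rightarrow> (nat \<Rightarrow> real) \<Rightarrow> nat \<Rightarrow> nat \<Rightarrow> real" where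
  "inv_metric g x = (THE h. (\<forall>a<4. \<forall>c<4. (\<Sum>b<4. g x a b * h b c) = (if a = c then 1 else 0))
                         \<and> (\<forall>a b. (4 \<le> a \<or> 4 \<le> b) \<longrightarrow> h a b = 0))"

definition christoffel :: "metric \<Rightarrow> (nat \<Rightarrow> real) \<Rightarrow> nat \<Rightarrow> nat \<Rightarrow> nat \<Rightarrow> real" where
  "christoffel g x a b c = (1/2) * (\<Sum>d<4. inv_metric g x a d *
      (pd b (\<lambda>y. g y d c) x + pd c (\<lambda>y. g y d b) x - pd d (\<lambda>y. g y b c) x))"

text \<open>Ricci tensor R_{bc} = R^a_{bac}.\<close>
definition ricci :: "metric \<Rightarrow> (nat \<Rightarrow> real) \<Rightarrow> nat \<Rightarrow> nat \<Rightarrow> real" where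
  "ricci g x b c =
     (\<Sum>a<4. pd a (\<lambda>y. christoffel g y a b c) x)
   - (\<Sum>a<4. pd c (\<lambda>y. christoffel g y a a b) x)
   + (\<Sum>a<4. \<Sum>d<4. christoffel g x a a d * christoffel g x d b c
                     - christoffel g x a c d * christoffel g x d a b)"

definition scalar_curv :: "metric \<Rightarrow> (nat \<Rightarrow> real) \<Rightarrow> real" where
  "scalar_curv g x = (\<Sum>a<4. \<Sum>c<4. inv_metric g x a c * ricci g x a c)"

definition sss_metric :: "(real \<Rightarrow> real) \<Rightarrow> (real \<Rightarrow> real) \<Rightarrow> (real \<Rightarrow> real) \<Rightarrow> metric" where
  "sss_metric b f1 f2 x k l =
     (if k \<noteq> l then 0
      else if k = 0 then - ((b (x 1))^2)
      else if k = 1 then (f1 (x 1))^2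
      else if k = 2 then (f2 (x 1))^2
      else if k = 3 then (f2 (x 1))^2 * (sin (x 2))^2
      else 0)"

text \<open>Covariant components u_k (u_0 = -b) and chi_k (chi_1 = f1).\<close>
definition u_vec :: "(real \<Rightarrow> real) \<Rightarrow> (nat \<Rightarrow> real) \<Rightarrow> nat \<Rightarrow> real" where
  "u_vec b x k = (if k = 0 then - b (x 1) else 0)"

definition chi_vec :: "(real \<Rightarrow> real) \<Rightarrow> (nat \<Rightarrow> real) \<Rightarrow> nat \<Rightarrow> real" where
  "chi_vec f1 x k = (if k = 1 then f1 (x 1) else 0)"

definition D_fun :: "(real \<Rightarrow> real) \<Rightarrow> (real \<Rightarrow> real) \<Rightarrow> (real \<Rightarrow> real) \<Rightarrow> real \<Rightarrow> real" where
  "D_fun b f1 f2 r = 1 / (b r * (f1 r)^2) *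
     (deriv (deriv b) r - deriv b r * (deriv f1 r / f1 r - 2 * deriv f2 r / f2 r))"

definition Sigma_fun :: "(real \<Rightarrow> real) \<Rightarrow> (real \<Rightarrow> real) \<Rightarrow> (real \<Rightarrow> real) \<Rightarrow> real \<Rightarrow> real" where
  "Sigma_fun b f1 f2 r =
     - 1 / (b r * (f1 r)^2) * (deriv (deriv b) r - deriv b r * (deriv f1 r / f1 r + deriv f2 r / f2 r))
     - 1 / (f1 r)^2 * ((f1 r)^2 / (f2 r)^2 + deriv (deriv f2) r / f2 r - (deriv f2 r / f2 r)^2
                        - deriv f1 r * deriv f2 r / (f1 r * f2 r))"

definition Rstar_fun :: "(real \<Rightarrow> real) \<Rightarrow> (real \<Rightarrow> real) \<Rightarrow> real \<Rightarrow> real" where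
  "Rstar_fun f1 f2 r = 2 / (f2 r)^2 - 2 / (f1 r)^2 *
     (2 * deriv (deriv f2) r / f2 r - 2 * deriv f1 r * deriv f2 r / (f1 r * f2 r) + (deriv f2 r / f2 r)^2)"

end

theory Submission
  imports Defs
begin


lemma alg:
  fixes B Bd Bdd F Fd H Hd Hdd sn mu pr pp kA kB kC Rtt Rrr Rhh S :: real
  assumes nz: "B \<noteq> 0" "F \<noteq> 0" "H \<noteq> 0" "sn \<noteq> 0"
  and rtt: "Rtt = B / F^2 * (Bdd - Bd * Fd / F + 2 * Bd * Hd / H)"
  and rrr: "Rrr = - Bdd / B + Bd * Fd / (B * F) - 2 * Hdd / H + 2 * Fd * Hd / (F * H)"
  and rhh: "Rhh = 1 - (H * Hdd + H * Hd * Bd / B - H * Hd * Fd / F + Hd^2) / F^2"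
  and s: "S = - Rtt / B^2 + Rrr / F^2 + 2 * Rhh / H^2"
  shows "(Rtt - 1/2 * S * (-(B^2)) = (mu + pp) * B^2 + pp * (-(B^2)) + (kB * H^2 - 2 * kC * B^2) * B^2
              + (kA + 2 * kB * H^2 + kC * B^2) * (-(B^2))
       \<and> Rrr - 1/2 * S * F^2 = pp * F^2 + (pr - pp) * F^2 + (kA + 2 * kB * H^2 + kC * B^2) * F^2 - kB * H^2 * F^2
       \<and> Rhh - 1/2 * S * H^2 = pp * H^2 + (kA + 2 * kB * H^2 + kC * B^2) * H^2
       \<and> sn^2 * Rhh - 1/2 * S * (H^2 * sn^2) = pp * (H^2 * sn^2) + (kA + 2 * kB * H^2 + kC * B^2) * (H^2 * sn^2))
   \<longleftrightarrow>
     (1/2 * (2 / H^2 - 2 / F^2 * (2 * Hdd / H - 2 * Fd * Hd / (F * H) + (Hd / H)^2)) = mu - 3 * kC * B^2 - kB * H^2 - kA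
      \<and> 1 / (B * F^2) * (Bdd - Bd * (Fd / F - 2 * Hd / H)) = 3/2 * ((pr + 2 * pp) / 3) + 1/2 * mu + 2 * kB * H^2 + kA
      \<and> - 1 / (B * F^2) * (Bdd - Bd * (Fd / F + Hd / H)) - 1 / F^2 * (F^2 / H^2 + Hdd / H - (Hd / H)^2 - Fd * Hd / (F * H))
          = (pr - pp) - kB * H^2)"
proof -
  define a where "a = (Rtt - 1/2 * S * (-(B^2)) - ((mu + pp) * B^2 + pp * (-(B^2)) + (kB * H^2 - 2 * kC * B^2) * B^2
              + (kA + 2 * kB * H^2 + kC * B^2) * (-(B^2)))) / B^2"
  define \<beta> where "\<beta> = (Rrr - 1/2 * S * F^2 - (pp * F^2 + (pr - pp) * F^2 + (kA + 2 * kB * H^2 + kC * B^2) * F^2 - kB * H^2 * F^2)) / F^2"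
  define c where "c = (Rhh - 1/2 * S * H^2 - (pp * H^2 + (kA + 2 * kB * H^2 + kC * B^2) * H^2)) / H^2"
  have E0: "(Rtt - 1/2 * S * (-(B^2)) = (mu + pp) * B^2 + pp * (-(B^2)) + (kB * H^2 - 2 * kC * B^2) * B^2
              + (kA + 2 * kB * H^2 + kC * B^2) * (-(B^2))) \<longleftrightarrow> a = 0"
    using nz unfolding a_def by (simp add: field_simps)
  have E1: "(Rrr - 1/2 * S * F^2 = pp * F^2 + (pr - pp) * F^2 + (kA + 2 * kB * H^2 + kC * B^2) * F^2 - kB * H^2 * F^2) \<longleftrightarrow> \<beta> = 0"
    using nz unfolding \<beta>_def by (simp add: field_simps)
  have E2: "(Rhh - 1/2 * S * H^2 = pp * H^2 + (kA + 2 * kB * H^2 + kC * B^2) * H^2) \<longleftrightarrow> c = 0"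
    using nz unfolding c_def by (simp add: field_simps)
  have E3: "(sn^2 * Rhh - 1/2 * S * (H^2 * sn^2) = pp * (H^2 * sn^2) + (kA + 2 * kB * H^2 + kC * B^2) * (H^2 * sn^2)) \<longleftrightarrow> c = 0"
  proof -
    have d: "sn^2 * Rhh - 1/2 * S * (H^2 * sn^2) - (pp * (H^2 * sn^2) + (kA + 2 * kB * H^2 + kC * B^2) * (H^2 * sn^2)) = sn^2 * (H^2 * c)"
      using nz unfolding c_def by (simp add: field_simps)
    show ?thesis using nz unfolding eq_iff_diff_eq_0[of "sn^2 * Rhh - 1/2 * S * (H^2 * sn^2)"] d by simp
  qed
  have e1: "1/2 * (2 / H^2 - 2 / F^2 * (2 * Hdd / H - 2 * Fd * Hd / (F * H) + (Hd / H)^2)) - (mu - 3 * kC * B^2 - kB * H^2 - kA) = a"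
    using nz unfolding a_def s rtt rrr rhh by (simp add: field_simps power2_eq_square)
  have e2: "1 / (B * F^2) * (Bdd - Bd * (Fd / F - 2 * Hd / H)) - (3/2 * ((pr + 2 * pp) / 3) + 1/2 * mu + 2 * kB * H^2 + kA)
       = 1/2 * a + 1/2 * \<beta> + c"
    using nz unfolding a_def \<beta>_def c_def s rtt rrr rhh by (simp add: field_simps power2_eq_square)
  have e3: "- 1 / (B * F^2) * (Bdd - Bd * (Fd / F + Hd / H)) - 1 / F^2 * (F^2 / H^2 + Hdd / H - (Hd / H)^2 - Fd * Hd / (F * H))
          - ((pr - pp) - kB * H^2) = \<beta> - c"
    using nz unfolding \<beta>_def c_def s rtt rrr rhh by (simp add: field_simps power2_eq_square)
  show ?thesis unfolding E0 E1 E2 E3 using e1 e2 e3 by linarith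
qed


locale sssl =
  fixes b f1 f2 :: "real \<Rightarrow> real" and I :: "real set"
  assumes opI: "open I"
    and sb: "smooth_on I b" and sf1: "smooth_on I f1" and sf2: "smooth_on I f2"
    and pb: "\<forall>r\<in>I. b r > 0" and pf1: "\<forall>r\<in>I. f1 r > 0" and pf2: "\<forall>r\<in>I. f2 r > 0"
begin

abbreviation "g \<equiv> sss_metric b f1 f2"

lemma d0: assumes "smooth_on I h" "r \<in> I" shows "(h has_real_derivative deriv h r) (at r)"
  using assms unfolding smooth_on_def
  by (metis DERIV_deriv_iff_real_differentiable funpow_0)

lemma d1: assumes "smooth_on I h" "r \<in> I" shows "(deriv h has_real_derivative deriv (deriv h) r) (at r)"
proof -
  have "((deriv ^^ 1) h) differentiable (at r)" using assms unfolding smooth_on_def by blast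
  thus ?thesis by (simp add: DERIV_deriv_iff_real_differentiable)
qed

definition comp :: "nat \<Rightarrow> real \<Rightarrow> real \<Rightarrow> real" where
  "comp d r \<theta> = (if d=0 then -((b r)^2) else if d=1 then (f1 r)^2 else if d=2 then (f2 r)^2
     else if d=3 then (f2 r)^2 * (sin \<theta>)^2 else 0)"

lemma g_eq: "g y d c = (if d = c then comp d (y 1) (y 2) else 0)"
  unfolding sss_metric_def comp_def by auto

definition dG :: "nat \<Rightarrow> nat \<Rightarrow> real \<Rightarrow> real \<Rightarrow> real" where
  "dG i d r \<theta> = (if i=1 then (if d=0 then -2*b r*deriv b r else if d=1 then 2*f1 r*deriv f1 r
      else if d=2 then 2*f2 r*deriv f2 r else if d=3 then 2*f2 r*deriv f2 r*(sin \<theta>)^2 else 0)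
    else if i=2 \<and> d=3 then 2 * (f2 r)^2 * sin \<theta> * cos \<theta> else 0)"

definition good :: "(nat \<Rightarrow> real) \<Rightarrow> bool" where "good y \<longleftrightarrow> y 1 \<in> I \<and> sin (y 2) \<noteq> 0"

lemma comp_nz: "good y \<Longrightarrow> d < 4 \<Longrightarrow> comp d (y 1) (y 2) \<noteq> 0"
  using pb pf1 pf2 unfolding good_def comp_def
  by (auto simp: eval_nat_numeral less_Suc_eq)

lemma pd_g: assumes "good y"
  shows "pd i (\<lambda>y. g y d c) y = (if d = c then dG i d (y 1) (y 2) else 0)"
proof (cases "d = c")
  case False thus ?thesis by (simp add: pd_def g_eq)
next
  case True
  have r: "y 1 \<in> I" using assms good_def by auto
  note D = d0[OF sb r] d0[OF sf1 r] d0[OF sf2 r]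
  show ?thesis
  proof (cases "i = 1")
    case True
    have "pd i (\<lambda>y. g y d c) y = deriv (\<lambda>s. comp d s (y 2)) (y 1)"
      using True \<open>d=c\<close> by (simp add: pd_def g_eq)
    also have "\<dots> = dG i d (y 1) (y 2)"
      using True
      by (intro DERIV_imp_deriv) (auto simp: comp_def dG_def intro!: derivative_eq_intros D[simplified])
    finally show ?thesis using \<open>d=c\<close> by simp
  next
    case i1: False
    show ?thesis
    proof (cases "i = 2")
      case True
      have "pd i (\<lambda>y. g y d c) y = deriv (\<lambda>s. comp d (y 1) s) (y 2)"
        using True \<open>d=c\<close> by (simp add: pd_def g_eq)
      also have "\<dots> = dG i d (y 1) (y 2)"
      proof (intro DERIV_imp_deriv)
        show "((\<lambda>s. comp d (y 1) s) has_real_derivative dG i d (y 1) (y 2)) (at (y 2))"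
          unfolding comp_def dG_def using True
          by (cases "d=3") (auto intro!: derivative_eq_intros cong: if_cong)
      qed
      finally show ?thesis using \<open>d=c\<close> by simp
    next
      case False
      have "pd i (\<lambda>y. g y d c) y = deriv (\<lambda>s. comp d (y 1) (y 2)) (y i)"
        using False i1 \<open>d=c\<close> by (simp add: pd_def g_eq)
      thus ?thesis using False i1 \<open>d=c\<close> by (simp add: dG_def)
    qed
  qed
qed

lemma inv_g: assumes "good y"
  shows "inv_metric g y = (\<lambda>a c. if a = c \<and> a < 4 then 1 / comp a (y 1) (y 2) else 0)"
proof -
  have sumd: "(\<Sum>j<4. g y a j * h j c) = comp a (y 1) (y 2) * h a c" if "a < 4" for a c and h :: "nat \<Rightarrow> nat \<Rightarrow> real"
  proof -
    have "(\<Sum>j<4. g y a j * h j c) = (\<Sum>j<4. if a = j then comp a (y 1) (y 2) * h a c else 0)"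
      by (rule sum.cong) (auto simp: g_eq)
    also have "\<dots> = comp a (y 1) (y 2) * h a c" using that by (simp add: sum.delta)
    finally show ?thesis .
  qed
  define h0 where "h0 = (\<lambda>a c. if a = c \<and> a < 4 then 1 / comp a (y 1) (y 2) else (0::real))"
  show ?thesis unfolding inv_metric_def h0_def[symmetric]
  proof (rule the_equality)
    show "(\<forall>a<4. \<forall>c<4. (\<Sum>j<4. g y a j * h0 j c) = (if a = c then 1 else 0)) \<and>
    (\<forall>a c. 4 \<le> a \<or> 4 \<le> c \<longrightarrow> h0 a c = 0)"
      using comp_nz[OF assms] by (simp add: sumd) (auto simp: h0_def)
  next
    fix h assume H: "(\<forall>a<4. \<forall>c<4. (\<Sum>j<4. g y a j * h j c) = (if a = c then 1 else 0)) \<and> (\<forall>a c. 4 \<le> a \<or> 4 \<le> c \<longrightarrow> h a c = 0)"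
    show "h = h0"
    proof (intro ext)
      fix a c
      show "h a c = h0 a c"
      proof (cases "a < 4 \<and> c < 4")
        case True
        then have "comp a (y 1) (y 2) * h a c = (if a = c then 1 else 0)" using H sumd by auto
        then show ?thesis using comp_nz[OF assms, of a] True unfolding h0_def
          by (auto simp: field_simps)
      next
        case False then show ?thesis using H unfolding h0_def by auto
      qed
    qed
  qed
qed


definition GamT :: "real \<Rightarrow> real \<Rightarrow> nat \<Rightarrow> nat \<Rightarrow> nat \<Rightarrow> real" where
 "GamT r \<theta> i j k =
  (if i=0 \<and> ((j=0\<and>k=1) \<or> (j=1\<and>k=0)) then deriv b r / b r
  else if i=1 \<and> j=0 \<and> k=0 then b r * deriv b r / (f1 r)^2
  else if i=1 \<and> j=1 \<and> k=1 then deriv f1 r / f1 r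
  else if i=1 \<and> j=2 \<and> k=2 then - f2 r * deriv f2 r / (f1 r)^2
  else if i=1 \<and> j=3 \<and> k=3 then - f2 r * deriv f2 r * (sin \<theta>)^2 / (f1 r)^2
  else if i=2 \<and> ((j=1\<and>k=2) \<or> (j=2\<and>k=1)) then deriv f2 r / f2 r
  else if i=2 \<and> j=3 \<and> k=3 then - sin \<theta> * cos \<theta>
  else if i=3 \<and> ((j=1\<and>k=3) \<or> (j=3\<and>k=1)) then deriv f2 r / f2 r
  else if i=3 \<and> ((j=2\<and>k=3) \<or> (j=3\<and>k=2)) then cos \<theta> / sin \<theta>
  else 0)"

definition dGx :: "nat \<Rightarrow> nat \<Rightarrow> nat \<Rightarrow> real \<Rightarrow> real \<Rightarrow> real" where
  "dGx m d c r \<theta> = (if d = c then dG m d r \<theta> else 0)"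

lemma chr1: assumes "good y" "i < 4"
  shows "christoffel g y i j k = 1/2 * (1 / comp i (y 1) (y 2) *
     (dGx j i k (y 1) (y 2) + dGx k i j (y 1) (y 2) - dGx i j k (y 1) (y 2)))"
proof -
  have "christoffel g y i j k = 1/2 * (\<Sum>d<4. (if d = i then 1 / comp i (y 1) (y 2) *
     (dGx j i k (y 1) (y 2) + dGx k i j (y 1) (y 2) - dGx i j k (y 1) (y 2)) else 0))"
    unfolding christoffel_def inv_g[OF assms(1)] pd_g[OF assms(1)] dGx_def
    by (intro arg_cong[where f="\<lambda>z. 1/2 * z"] sum.cong) auto
  also have "\<dots> = 1/2 * (1 / comp i (y 1) (y 2) *
     (dGx j i k (y 1) (y 2) + dGx k i j (y 1) (y 2) - dGx i j k (y 1) (y 2)))"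
    using assms(2) by (simp add: sum.delta')
  finally show ?thesis .
qed

lemma four: "i < (4::nat) \<Longrightarrow> i = 0 \<or> i = 1 \<or> i = 2 \<or> i = 3" by auto

lemma tab: assumes "r \<in> I" "sin \<theta> \<noteq> 0" "i < 4" "j < 4" "k < 4"
  shows "1/2 * (1 / comp i r \<theta> * (dGx j i k r \<theta> + dGx k i j r \<theta> - dGx i j k r \<theta>)) = GamT r \<theta> i j k"
proof -
  have "b r \<noteq> 0" "f1 r \<noteq> 0" "f2 r \<noteq> 0" using assms pb pf1 pf2 by auto
  then show ?thesis using four[OF assms(3)] four[OF assms(4)] four[OF assms(5)] assms(2)
    by (auto simp: GamT_def comp_def dGx_def dG_def field_simps power2_eq_square)
qed

lemma chr: assumes "good y" "i < 4" "j < 4" "k < 4"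
  shows "christoffel g y i j k = GamT (y 1) (y 2) i j k"
  using chr1[OF assms(1,2)] tab[OF _ _ assms(2-4)] assms(1) unfolding good_def by auto



lemma DERIV_ifc: "(P \<Longrightarrow> (f has_real_derivative a) (at x)) \<Longrightarrow> (\<not>P \<Longrightarrow> (h has_real_derivative c) (at x))
   \<Longrightarrow> ((\<lambda>s. if P then f s else h s) has_real_derivative (if P then a else c)) (at x)"
  by (cases P) auto

definition dGam1 :: "real \<Rightarrow> real \<Rightarrow> nat \<Rightarrow> nat \<Rightarrow> nat \<Rightarrow> real" where
 "dGam1 r \<theta> i j k =
  (if i=0 \<and> ((j=0\<and>k=1) \<or> (j=1\<and>k=0)) then (deriv (deriv b) r * b r - (deriv b r)^2) / (b r)^2
  else if i=1 \<and> j=0 \<and> k=0 then ((deriv b r)^2 + b r * deriv (deriv b) r) / (f1 r)^2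
        - 2 * b r * deriv b r * deriv f1 r / (f1 r)^3
  else if i=1 \<and> j=1 \<and> k=1 then (deriv (deriv f1) r * f1 r - (deriv f1 r)^2) / (f1 r)^2
  else if i=1 \<and> j=2 \<and> k=2 then - ((deriv f2 r)^2 + f2 r * deriv (deriv f2) r) / (f1 r)^2
        + 2 * f2 r * deriv f2 r * deriv f1 r / (f1 r)^3
  else if i=1 \<and> j=3 \<and> k=3 then (- ((deriv f2 r)^2 + f2 r * deriv (deriv f2) r) / (f1 r)^2
        + 2 * f2 r * deriv f2 r * deriv f1 r / (f1 r)^3) * (sin \<theta>)^2
  else if i=2 \<and> ((j=1\<and>k=2) \<or> (j=2\<and>k=1)) then (deriv (deriv f2) r * f2 r - (deriv f2 r)^2) / (f2 r)^2
  else if i=2 \<and> j=3 \<and> k=3 then 0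
  else if i=3 \<and> ((j=1\<and>k=3) \<or> (j=3\<and>k=1)) then (deriv (deriv f2) r * f2 r - (deriv f2 r)^2) / (f2 r)^2
  else if i=3 \<and> ((j=2\<and>k=3) \<or> (j=3\<and>k=2)) then 0
  else 0)"

definition dGam2 :: "real \<Rightarrow> real \<Rightarrow> nat \<Rightarrow> nat \<Rightarrow> nat \<Rightarrow> real" where
 "dGam2 r \<theta> i j k =
  (if i=0 \<and> ((j=0\<and>k=1) \<or> (j=1\<and>k=0)) then 0
  else if i=1 \<and> j=0 \<and> k=0 then 0
  else if i=1 \<and> j=1 \<and> k=1 then 0
  else if i=1 \<and> j=2 \<and> k=2 then 0
  else if i=1 \<and> j=3 \<and> k=3 then - 2 * f2 r * deriv f2 r * sin \<theta> * cos \<theta> / (f1 r)^2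
  else if i=2 \<and> ((j=1\<and>k=2) \<or> (j=2\<and>k=1)) then 0
  else if i=2 \<and> j=3 \<and> k=3 then - ((cos \<theta>)^2 - (sin \<theta>)^2)
  else if i=3 \<and> ((j=1\<and>k=3) \<or> (j=3\<and>k=1)) then 0
  else if i=3 \<and> ((j=2\<and>k=3) \<or> (j=3\<and>k=2)) then - 1 / (sin \<theta>)^2
  else 0)"

lemma dGam1_ok: assumes "r \<in> I"
  shows "((\<lambda>s. GamT s \<theta> i j k) has_real_derivative dGam1 r \<theta> i j k) (at r)"
proof -
  have nz: "b r \<noteq> 0" "f1 r \<noteq> 0" "f2 r \<noteq> 0" using assms pb pf1 pf2 by auto
  note D = d0[OF sb assms(1)] d0[OF sf1 assms(1)] d0[OF sf2 assms(1)]
           d1[OF sb assms(1)] d1[OF sf1 assms(1)] d1[OF sf2 assms(1)]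
  show ?thesis unfolding GamT_def dGam1_def
    apply (intro DERIV_ifc)
    using nz
    apply (auto intro!: derivative_eq_intros D simp: field_simps power2_eq_square power3_eq_cube)
    done
qed

lemma dGam2_ok: assumes "sin \<theta> \<noteq> 0" "f1 r \<noteq> 0"
  shows "((\<lambda>s. GamT r s i j k) has_real_derivative dGam2 r \<theta> i j k) (at \<theta>)"
proof -
  have cs: "cos \<theta> * cos \<theta> = 1 - sin \<theta> * sin \<theta>"
    by (metis add_diff_cancel_left' power2_eq_square sin_cos_squared_add)
  show ?thesis unfolding GamT_def dGam2_def
  apply (intro DERIV_ifc)
  using assms
  apply (auto intro!: derivative_eq_intros simp: field_simps power2_eq_square cs)
  done
qed


definition PD :: "real \<Rightarrow> real \<Rightarrow> nat \<Rightarrow> nat \<Rightarrow> nat \<Rightarrow> nat \<Rightarrow> real" where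
  "PD r \<theta> m i j k = (if m = 1 then dGam1 r \<theta> i j k else if m = 2 then dGam2 r \<theta> i j k else 0)"

lemma pdGam: assumes "x 1 \<in> I" "0 < x 2" "x 2 < pi" "i<4" "j<4" "k<4"
  shows "pd m (\<lambda>y. christoffel g y i j k) x = PD (x 1) (x 2) m i j k"
proof -
  have s2: "sin (x 2) \<noteq> 0" using assms sin_gt_zero by force
  have f1nz: "f1 (x 1) \<noteq> 0" using assms pf1 by force
  show ?thesis
  proof (cases "m = 1")
    case True
    have ev: "eventually (\<lambda>s. christoffel g (x(1:=s)) i j k = GamT s (x 2) i j k) (nhds (x 1))"
    proof -
      have "eventually (\<lambda>s. s \<in> I) (nhds (x 1))" using opI assms(1) eventually_nhds_in_open by blast
      then show ?thesis
        by (rule eventually_mono) (use s2 assms(4-6) in \<open>auto simp: chr good_def\<close>)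
    qed
    have "pd m (\<lambda>y. christoffel g y i j k) x = deriv (\<lambda>s. christoffel g (x(1:=s)) i j k) (x 1)"
      using True by (simp add: pd_def)
    also have "\<dots> = deriv (\<lambda>s. GamT s (x 2) i j k) (x 1)" by (rule deriv_cong_ev[OF ev refl])
    also have "\<dots> = dGam1 (x 1) (x 2) i j k" by (rule DERIV_imp_deriv[OF dGam1_ok[OF assms(1)]])
    finally show ?thesis using True by (simp add: PD_def)
  next
    case m1: False
    show ?thesis
    proof (cases "m = 2")
      case True
      have ev: "eventually (\<lambda>s. christoffel g (x(2:=s)) i j k = GamT (x 1) s i j k) (nhds (x 2))"
      proof -
        have "eventually (\<lambda>s. s \<in> {0<..<pi}) (nhds (x 2))"
          using assms(2,3) eventually_nhds_in_open[of "{0<..<pi}"] by auto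
        then show ?thesis
        proof (rule eventually_mono)
          fix s :: real assume "s \<in> {0<..<pi}"
          hence G: "good (x(2:=s))" using assms(1) sin_gt_zero by (force simp: good_def)
          show "christoffel g (x(2:=s)) i j k = GamT (x 1) s i j k" using chr[OF G assms(4-6)] by simp
        qed
      qed
      have "pd m (\<lambda>y. christoffel g y i j k) x = deriv (\<lambda>s. christoffel g (x(2:=s)) i j k) (x 2)"
        using True by (simp add: pd_def)
      also have "\<dots> = deriv (\<lambda>s. GamT (x 1) s i j k) (x 2)" by (rule deriv_cong_ev[OF ev refl])
      also have "\<dots> = dGam2 (x 1) (x 2) i j k" by (rule DERIV_imp_deriv[OF dGam2_ok[OF s2 f1nz]])
      finally show ?thesis using True by (simp add: PD_def)
    next
      case False
      have "\<And>s. christoffel g (x(m:=s)) i j k = GamT (x 1) (x 2) i j k"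
        using False m1 assms s2 by (auto simp: chr good_def)
      then show ?thesis using False m1 by (simp add: pd_def PD_def)
    qed
  qed
qed

lemma ricci_expl: assumes "x 1 \<in> I" "0 < x 2" "x 2 < pi" "j<4" "k<4"
  shows "ricci g x j k =
     (\<Sum>a<4. PD (x 1) (x 2) a a j k)
   - (\<Sum>a<4. PD (x 1) (x 2) k a a j)
   + (\<Sum>a<4. \<Sum>d<4. GamT (x 1) (x 2) a a d * GamT (x 1) (x 2) d j k
                     - GamT (x 1) (x 2) a k d * GamT (x 1) (x 2) d a j)"
proof -
  have gx: "good x" using assms sin_gt_zero unfolding good_def by force
  show ?thesis unfolding ricci_def
    apply (intro arg_cong2[where f="(+)"] arg_cong2[where f="(-)"] sum.cong refl)
    using assms gx by (auto simp: pdGam chr)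
qed


lemma lt4: "(0::nat)<4" "(1::nat)<4" "(2::nat)<4" "(3::nat)<4" by auto

lemma sum4: "(\<Sum>a<(4::nat). h a) = h 0 + h 1 + h 2 + (h 3 :: real)"
  by (simp add: eval_nat_numeral)

lemma R00: assumes "x 1 \<in> I" "0 < x 2" "x 2 < pi"
  shows "ricci g x 0 0 = b (x 1) / (f1 (x 1))^2 * (deriv (deriv b) (x 1) - deriv b (x 1) * deriv f1 (x 1) / f1 (x 1)
      + 2 * deriv b (x 1) * deriv f2 (x 1) / f2 (x 1))"
proof -
  have nz: "b (x 1) \<noteq> 0" "f1 (x 1) \<noteq> 0" "f2 (x 1) \<noteq> 0" using assms pb pf1 pf2 by force+
  show ?thesis
    unfolding ricci_expl[OF assms lt4(1) lt4(1)] sum4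
    using nz by (simp add: PD_def dGam1_def dGam2_def GamT_def field_simps power2_eq_square power3_eq_cube)
qed


lemma R11: assumes "x 1 \<in> I" "0 < x 2" "x 2 < pi"
  shows "ricci g x 1 1 = - deriv (deriv b) (x 1) / b (x 1) + deriv b (x 1) * deriv f1 (x 1) / (b (x 1) * f1 (x 1))
     - 2 * deriv (deriv f2) (x 1) / f2 (x 1) + 2 * deriv f1 (x 1) * deriv f2 (x 1) / (f1 (x 1) * f2 (x 1))"
proof -
  have nz: "b (x 1) \<noteq> 0" "f1 (x 1) \<noteq> 0" "f2 (x 1) \<noteq> 0" using assms pb pf1 pf2 by force+
  show ?thesis
    unfolding ricci_expl[OF assms lt4(2) lt4(2)] sum4
    using nz by (simp add: PD_def dGam1_def dGam2_def GamT_def field_simps power2_eq_square power3_eq_cube)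
qed

lemma R22: assumes "x 1 \<in> I" "0 < x 2" "x 2 < pi"
  shows "ricci g x 2 2 = 1 - (f2 (x 1) * deriv (deriv f2) (x 1) + f2 (x 1) * deriv f2 (x 1) * deriv b (x 1) / b (x 1)
     - f2 (x 1) * deriv f2 (x 1) * deriv f1 (x 1) / f1 (x 1) + (deriv f2 (x 1))^2) / (f1 (x 1))^2"
proof -
  have nz: "b (x 1) \<noteq> 0" "f1 (x 1) \<noteq> 0" "f2 (x 1) \<noteq> 0" "sin (x 2) \<noteq> 0" using assms pb pf1 pf2 sin_gt_zero by force+
  have cs: "cos (x 2) * cos (x 2) = 1 - sin (x 2) * sin (x 2)"
    by (metis add_diff_cancel_left' power2_eq_square sin_cos_squared_add)
  show ?thesis
    unfolding ricci_expl[OF assms lt4(3) lt4(3)] sum4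
    using nz by (simp add: PD_def dGam1_def dGam2_def GamT_def field_simps power2_eq_square power3_eq_cube cs)
qed

lemma R33: assumes "x 1 \<in> I" "0 < x 2" "x 2 < pi"
  shows "ricci g x 3 3 = (sin (x 2))^2 * (1 - (f2 (x 1) * deriv (deriv f2) (x 1) + f2 (x 1) * deriv f2 (x 1) * deriv b (x 1) / b (x 1)
     - f2 (x 1) * deriv f2 (x 1) * deriv f1 (x 1) / f1 (x 1) + (deriv f2 (x 1))^2) / (f1 (x 1))^2)"
proof -
  have nz: "b (x 1) \<noteq> 0" "f1 (x 1) \<noteq> 0" "f2 (x 1) \<noteq> 0" "sin (x 2) \<noteq> 0" using assms pb pf1 pf2 sin_gt_zero by force+
  have cs: "cos (x 2) * cos (x 2) = 1 - sin (x 2) * sin (x 2)"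
    by (metis add_diff_cancel_left' power2_eq_square sin_cos_squared_add)
  show ?thesis
    unfolding ricci_expl[OF assms lt4(4) lt4(4)] sum4
    using nz by (simp add: PD_def dGam1_def dGam2_def GamT_def field_simps power2_eq_square power3_eq_cube cs)
qed

lemma Roff: assumes "x 1 \<in> I" "0 < x 2" "x 2 < pi" "j < 4" "k < 4" "j \<noteq> k"
  shows "ricci g x j k = 0"
proof -
  have nz: "b (x 1) \<noteq> 0" "f1 (x 1) \<noteq> 0" "f2 (x 1) \<noteq> 0" "sin (x 2) \<noteq> 0" using assms pb pf1 pf2 sin_gt_zero by force+
  show ?thesis
    unfolding ricci_expl[OF assms(1-5)] sum4
    using nz four[OF assms(4)] four[OF assms(5)] assms(6)
    by (auto simp: PD_def dGam1_def dGam2_def GamT_def field_simps power2_eq_square power3_eq_cube)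
qed


lemma scal: assumes "x 1 \<in> I" "0 < x 2" "x 2 < pi"
  shows "scalar_curv g x = ricci g x 0 0 / comp 0 (x 1) (x 2) + ricci g x 1 1 / comp 1 (x 1) (x 2)
     + ricci g x 2 2 / comp 2 (x 1) (x 2) + ricci g x 3 3 / comp 3 (x 1) (x 2)"
proof -
  have gx: "good x" using assms sin_gt_zero unfolding good_def by force
  show ?thesis unfolding scalar_curv_def inv_g[OF gx] sum4 by simp
qed

lemma all4: "(\<forall>k<(4::nat). P k) \<longleftrightarrow> (P 0 \<and> P 1 \<and> P 2 \<and> P 3)"
  by (metis four lt4)


lemma eq_cong2: "(A::real) - B = C - D \<Longrightarrow> (A = B) \<longleftrightarrow> (C = D)" by auto

definition EQ :: "(real \<Rightarrow> real) \<Rightarrow> (real \<Rightarrow> real) \<Rightarrow> (real \<Rightarrow> real) \<Rightarrow> real \<Rightarrow> real \<Rightarrow> real \<Rightarrow> (nat \<Rightarrow> real) \<Rightarrow> nat \<Rightarrow> nat \<Rightarrow> bool" where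
  "EQ mu pr pp \<kappa>1 \<kappa>2 \<kappa>3 x k l \<longleftrightarrow> (ricci (sss_metric b f1 f2) x k l
              - 1/2 * scalar_curv (sss_metric b f1 f2) x * sss_metric b f1 f2 x k l
            = ((mu (x 1) + pp (x 1)) * u_vec b x k * u_vec b x l + pp (x 1) * sss_metric b f1 f2 x k l
                 + (pr (x 1) - pp (x 1)) * chi_vec f1 x k * chi_vec f1 x l)
              + ((\<kappa>2 * (f2 (x 1))^2 - 2 * \<kappa>3 * (b (x 1))^2) * u_vec b x k * u_vec b x l
                 + (\<kappa>1 + 2 * \<kappa>2 * (f2 (x 1))^2 + \<kappa>3 * (b (x 1))^2) * sss_metric b f1 f2 x k l
                 - \<kappa>2 * (f2 (x 1))^2 * chi_vec f1 x k * chi_vec f1 x l))"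

lemma main: assumes "x 1 \<in> I" "0 < x 2" "x 2 < pi"
  shows "(\<forall>k<4. \<forall>l<4.
            ricci (sss_metric b f1 f2) x k l
              - 1/2 * scalar_curv (sss_metric b f1 f2) x * sss_metric b f1 f2 x k l
            = ((mu (x 1) + pp (x 1)) * u_vec b x k * u_vec b x l + pp (x 1) * sss_metric b f1 f2 x k l
                 + (pr (x 1) - pp (x 1)) * chi_vec f1 x k * chi_vec f1 x l)
              + ((\<kappa>2 * (f2 (x 1))^2 - 2 * \<kappa>3 * (b (x 1))^2) * u_vec b x k * u_vec b x l
                 + (\<kappa>1 + 2 * \<kappa>2 * (f2 (x 1))^2 + \<kappa>3 * (b (x 1))^2) * sss_metric b f1 f2 x k l
                 - \<kappa>2 * (f2 (x 1))^2 * chi_vec f1 x k * chi_vec f1 x l))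
         \<longleftrightarrow>
         (1/2 * Rstar_fun f1 f2 (x 1) = mu (x 1) - 3 * \<kappa>3 * (b (x 1))^2 - \<kappa>2 * (f2 (x 1))^2 - \<kappa>1
          \<and> D_fun b f1 f2 (x 1) = 3/2 * ((pr (x 1) + 2 * pp (x 1)) / 3) + 1/2 * mu (x 1)
                                   + 2 * \<kappa>2 * (f2 (x 1))^2 + \<kappa>1
          \<and> Sigma_fun b f1 f2 (x 1) = (pr (x 1) - pp (x 1)) - \<kappa>2 * (f2 (x 1))^2)"
proof -
  have nz: "b (x 1) \<noteq> 0" "f1 (x 1) \<noteq> 0" "f2 (x 1) \<noteq> 0" "sin (x 2) \<noteq> 0" using assms pb pf1 pf2 sin_gt_zero by force+
  have r33: "ricci g x 3 3 = (sin (x 2))^2 * ricci g x 2 2" unfolding R33[OF assms] R22[OF assms] ..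
  have S: "scalar_curv g x = - ricci g x 0 0 / (b (x 1))^2 + ricci g x 1 1 / (f1 (x 1))^2 + 2 * ricci g x 2 2 / (f2 (x 1))^2"
    unfolding scal[OF assms] r33 using nz by (simp add: comp_def field_simps)
  note ALG = alg[OF nz R00[OF assms] R11[OF assms] R22[OF assms] S]
  let ?E = "EQ mu pr pp \<kappa>1 \<kappa>2 \<kappa>3 x"
  have G: "?thesis \<longleftrightarrow> ((\<forall>k<4. \<forall>l<4. ?E k l) \<longleftrightarrow> (1/2 * Rstar_fun f1 f2 (x 1) = mu (x 1) - 3 * \<kappa>3 * (b (x 1))^2 - \<kappa>2 * (f2 (x 1))^2 - \<kappa>1
          \<and> D_fun b f1 f2 (x 1) = 3/2 * ((pr (x 1) + 2 * pp (x 1)) / 3) + 1/2 * mu (x 1)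
                                   + 2 * \<kappa>2 * (f2 (x 1))^2 + \<kappa>1
          \<and> Sigma_fun b f1 f2 (x 1) = (pr (x 1) - pp (x 1)) - \<kappa>2 * (f2 (x 1))^2))"
    unfolding EQ_def ..
  have offE: "?E j k" if "j < 4" "k < 4" "j \<noteq> k" for j k
    unfolding EQ_def Roff[OF assms that] using that by (simp add: sss_metric_def u_vec_def chi_vec_def)
  have E0: "?E 0 0 \<longleftrightarrow> (ricci g x 0 0 - 1/2 * scalar_curv g x * (-((b (x 1))^2)) = (mu (x 1) + pp (x 1)) * (b (x 1))^2 + pp (x 1) * (-((b (x 1))^2)) + (\<kappa>2 * (f2 (x 1))^2 - 2 * \<kappa>3 * (b (x 1))^2) * (b (x 1))^2
              + (\<kappa>1 + 2 * \<kappa>2 * (f2 (x 1))^2 + \<kappa>3 * (b (x 1))^2) * (-((b (x 1))^2)))"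
    unfolding EQ_def by (rule eq_cong2) (simp add: sss_metric_def u_vec_def chi_vec_def algebra_simps power2_eq_square)
  have E1: "?E 1 1 \<longleftrightarrow> (ricci g x 1 1 - 1/2 * scalar_curv g x * (f1 (x 1))^2 = pp (x 1) * (f1 (x 1))^2 + (pr (x 1) - pp (x 1)) * (f1 (x 1))^2 + (\<kappa>1 + 2 * \<kappa>2 * (f2 (x 1))^2 + \<kappa>3 * (b (x 1))^2) * (f1 (x 1))^2 - \<kappa>2 * (f2 (x 1))^2 * (f1 (x 1))^2)"
    unfolding EQ_def by (rule eq_cong2) (simp add: sss_metric_def u_vec_def chi_vec_def algebra_simps power2_eq_square)
  have E2: "?E 2 2 \<longleftrightarrow> (ricci g x 2 2 - 1/2 * scalar_curv g x * (f2 (x 1))^2 = pp (x 1) * (f2 (x 1))^2 + (\<kappa>1 + 2 * \<kappa>2 * (f2 (x 1))^2 + \<kappa>3 * (b (x 1))^2) * (f2 (x 1))^2)"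
    unfolding EQ_def by (rule eq_cong2) (simp add: sss_metric_def u_vec_def chi_vec_def algebra_simps power2_eq_square)
  have E3: "?E 3 3 \<longleftrightarrow> ((sin (x 2))^2 * ricci g x 2 2 - 1/2 * scalar_curv g x * ((f2 (x 1))^2 * (sin (x 2))^2) = pp (x 1) * ((f2 (x 1))^2 * (sin (x 2))^2) + (\<kappa>1 + 2 * \<kappa>2 * (f2 (x 1))^2 + \<kappa>3 * (b (x 1))^2) * ((f2 (x 1))^2 * (sin (x 2))^2))"
    unfolding EQ_def r33 by (rule eq_cong2) (simp add: sss_metric_def u_vec_def chi_vec_def algebra_simps power2_eq_square)
  have "(\<forall>k<4. \<forall>l<4. ?E k l) \<longleftrightarrow> (?E 0 0 \<and> ?E 1 1 \<and> ?E 2 2 \<and> ?E 3 3)"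
    unfolding all4 using offE by auto
  then have X: "(\<forall>k<4. \<forall>l<4. ?E k l) \<longleftrightarrow> (1/2 * Rstar_fun f1 f2 (x 1) = mu (x 1) - 3 * \<kappa>3 * (b (x 1))^2 - \<kappa>2 * (f2 (x 1))^2 - \<kappa>1
          \<and> D_fun b f1 f2 (x 1) = 3/2 * ((pr (x 1) + 2 * pp (x 1)) / 3) + 1/2 * mu (x 1)
                                   + 2 * \<kappa>2 * (f2 (x 1))^2 + \<kappa>1
          \<and> Sigma_fun b f1 f2 (x 1) = (pr (x 1) - pp (x 1)) - \<kappa>2 * (f2 (x 1))^2)"
    unfolding E0 E1 E2 E3 D_fun_def Sigma_fun_def Rstar_fun_def using ALG by (simp only:)
  show ?thesis using X unfolding EQ_def .
qed

end

theorem proposition3: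
  fixes b f1 f2 mu pr pp :: "real \<Rightarrow> real" and \<kappa>1 \<kappa>2 \<kappa>3 :: real
    and I :: "real set" and x :: "nat \<Rightarrow> real"
  assumes "open I"
    and "smooth_on I b" and "smooth_on I f1" and "smooth_on I f2"
    and "\<forall>r\<in>I. b r > 0" and "\<forall>r\<in>I. f1 r > 0" and "\<forall>r\<in>I. f2 r > 0"
    and "x 1 \<in> I" and "0 < x 2" and "x 2 < pi"
  shows "(\<forall>k<4. \<forall>l<4.
            ricci (sss_metric b f1 f2) x k l
              - 1/2 * scalar_curv (sss_metric b f1 f2) x * sss_metric b f1 f2 x k l
            = ((mu (x 1) + pp (x 1)) * u_vec b x k * u_vec b x l + pp (x 1) * sss_metric b f1 f2 x k l
                 + (pr (x 1) - pp (x 1)) * chi_vec f1 x k * chi_vec f1 x l)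
              + ((\<kappa>2 * (f2 (x 1))^2 - 2 * \<kappa>3 * (b (x 1))^2) * u_vec b x k * u_vec b x l
                 + (\<kappa>1 + 2 * \<kappa>2 * (f2 (x 1))^2 + \<kappa>3 * (b (x 1))^2) * sss_metric b f1 f2 x k l
                 - \<kappa>2 * (f2 (x 1))^2 * chi_vec f1 x k * chi_vec f1 x l))
         \<longleftrightarrow>
         (1/2 * Rstar_fun f1 f2 (x 1) = mu (x 1) - 3 * \<kappa>3 * (b (x 1))^2 - \<kappa>2 * (f2 (x 1))^2 - \<kappa>1
          \<and> D_fun b f1 f2 (x 1) = 3/2 * ((pr (x 1) + 2 * pp (x 1)) / 3) + 1/2 * mu (x 1)
                                   + 2 * \<kappa>2 * (f2 (x 1))^2 + \<kappa>1
          \<and> Sigma_fun b f1 f2 (x 1) = (pr (x 1) - pp (x 1)) - \<kappa>2 * (f2 (x 1))^2)"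
proof -
  interpret sssl b f1 f2 I using assms(1-7) by unfold_locales
  show ?thesis by (rule main[OF assms(8-10)])
qed

end
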